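(* Let $\mu,\nu,q\in\mathscr{P}_2(\mathbb{R}^d)$ with $\mu\preceq_{\mathrm{c}}\nu$ and $q$ not giving mass to small sets. Then \[ \tilde D^q(\mu,\nu)=\inf_{\substack{\psi\in C_2(\mathbb{R}^d),\\ \psi\text{ convex}}}\Big(\int\psi\,d\nu-\int(\psi^\ast\star q)^\ast\,d\mu\Big). \]
   Context: $\mathscr{P}_2(\mathbb{R}^d)$: Borel probability measures with finite second moment. $\mu\preceq_{\mathrm{c}}\nu$ means $\int f\,d\mu\le\int f\,d\nu$ for all convex $f:\mathbb{R}^d\to\mathbb{R}$. $q$ does not give mass to small sets: $q(A)=0$ for measurable $A$ of Hausdorff dimension $\le d-1$. $\mathrm{MCov}(p,q)\coloneqq\sup_{\tilde\pi\in\mathsf{Cpl}(p,q)}\int\langle y,z\rangle\,d\tilde\pi$. $C_2(\mathbb{R}^d)$: continuous $\psi:\mathbb{R}^d\to\mathbb{R}$ with $\ell+\frac{|y|^2}{2}\le\psi(y)\le a+k|y|^2$ for some $a,k,\ell\in\mathbb{R}$. $\mathscr{P}_2^x(\mathbb{R}^d)$: elements of $\mathscr{P}_2(\mathbb{R}^d)$ with barycenter $x$. $\varphi^\psi(x)\coloneqq\inf_{p\in\mathscr{P}_2^x(\mathbb{R}^d)}\big(\int\psi\,dp-\mathrm{MCov}(p,q)\big)$ and $\tilde D^q(\mu,\nu)\coloneqq\inf_{\psi\in C_2(\mathbb{R}^d)}\big(\int\psi\,d\nu-\int\varphi^\psi\,d\mu\big)$. $\psi^\ast$ is the convex conjugate,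 and $(f\star q)(y)\coloneqq\int f(y+z)\,q(dz)$. *)

theory Defs
  imports "HOL-Probability.Probability"
begin

definition diam_pow :: "'a::euclidean_space set \<Rightarrow> real \<Rightarrow> real" where
  "diam_pow S s = (if S = {} then 0 else if s = 0 then 1 else diameter S powr s)"

definition hausdorff_pre :: "real \<Rightarrow> real \<Rightarrow> 'a::euclidean_space set \<Rightarrow> ennreal" where
  "hausdorff_pre s \<delta> A =
     (INF C \<in> {C :: nat \<Rightarrow> 'a set. A \<subseteq> (\<Union>i. C i) \<and> (\<forall>i. bounded (C i) \<and> diameter (C i) \<le> \<delta>)}.
        (\<Sum>i. ennreal (diam_pow (C i) s)))"

definition hausdorff_measure :: "real \<Rightarrow> 'a::euclidean_space set \<Rightarrow> ennreal" where
  "hausdorff_measure s A = (SUP \<delta> \<in> {0<..}. hausdorff_pre s \<delta> A)"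

definition hausdorff_dim :: "'a::euclidean_space set \<Rightarrow> real" where
  "hausdorff_dim A = Inf {s. 0 \<le> s \<and> hausdorff_measure s A = 0}"

definition no_mass_small_sets :: "'a::euclidean_space measure \<Rightarrow> bool" where
  "no_mass_small_sets q \<longleftrightarrow>
     (\<forall>A \<in> sets q. hausdorff_dim A \<le> real DIM('a) - 1 \<longrightarrow> emeasure q A = 0)"

definition P2 :: "'a::euclidean_space measure set" where
  "P2 = {M. prob_space M \<and> sets M = sets borel \<and> integrable M (\<lambda>x. (norm x)\<^sup>2)}"

definition barycenter :: "'a::euclidean_space measure \<Rightarrow> 'a" where
  "barycenter M = (\<integral>y. y \<partial>M)"

definition P2x :: "'a::euclidean_space \<Rightarrow> 'a measure set" where
  "P2x x = {p \<in> P2. barycenter p = x}"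

text \<open>For measures with finite first moment, the (extended) integral of a
  convex function lies in (-infinity, +infinity]; hence int f dmu <= int f dnu holds iff
  whenever f is nu-integrable it is also mu-integrable with smaller integral.\<close>
definition convex_order :: "'a::euclidean_space measure \<Rightarrow> 'a measure \<Rightarrow> bool" where
  "convex_order \<mu> \<nu> \<longleftrightarrow>
     (\<forall>f :: 'a \<Rightarrow> real. convex_on UNIV f \<longrightarrow> integrable \<nu> f \<longrightarrow>
        (integrable \<mu> f \<and> (\<integral>x. f x \<partial>\<mu>) \<le> (\<integral>x. f x \<partial>\<nu>)))"

definition Cpl :: "'a::euclidean_space measure \<Rightarrow> 'a measure \<Rightarrow> ('a \<times> 'a) measure set" where
  "Cpl p q = {\<pi>. prob_space \<pi> \<and> sets \<pi> = sets (borel \<Otimes>\<^sub>M borel)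
                 \<and> distr \<pi> borel fst = p \<and> distr \<pi> borel snd = q}"

definition MCov :: "'a::euclidean_space measure \<Rightarrow> 'a measure \<Rightarrow> real" where
  "MCov p q = Sup ((\<lambda>\<pi>. \<integral>yz. fst yz \<bullet> snd yz \<partial>\<pi>) ` Cpl p q)"

definition C2 :: "('a::euclidean_space \<Rightarrow> real) set" where
  "C2 = {\<psi>. continuous_on UNIV \<psi> \<and>
           (\<exists>a k l. \<forall>y. l + (norm y)\<^sup>2 / 2 \<le> \<psi> y \<and> \<psi> y \<le> a + k * (norm y)\<^sup>2)}"

definition phi_psi :: "'a::euclidean_space measure \<Rightarrow> ('a \<Rightarrow> real) \<Rightarrow> 'a \<Rightarrow> real" where
  "phi_psi q \<psi> x = Inf ((\<lambda>p. (\<integral>y. \<psi> y \<partial>p) - MCov p q) ` P2x x)"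

definition D_tilde :: "'a::euclidean_space measure \<Rightarrow> 'a measure \<Rightarrow> 'a measure \<Rightarrow> ereal" where
  "D_tilde q \<mu> \<nu> = (INF \<psi> \<in> C2. ereal ((\<integral>y. \<psi> y \<partial>\<nu>) - (\<integral>x. phi_psi q \<psi> x \<partial>\<mu>)))"

text \<open>Convex conjugate (real-valued; in the use below it is always finite).\<close>
definition convex_conj :: "('a::euclidean_space \<Rightarrow> real) \<Rightarrow> 'a \<Rightarrow> real" where
  "convex_conj f x = (SUP y. x \<bullet> y - f y)"

definition conv_meas :: "('a::euclidean_space \<Rightarrow> real) \<Rightarrow> 'a measure \<Rightarrow> 'a \<Rightarrow> real" where
  "conv_meas f q y = (\<integral>z. f (y + z) \<partial>q)"

end

theory Submission
  imports Defs
begin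


lemma integrable_dom:
  fixes f :: "'b \<Rightarrow> real"
  assumes "integrable M g" "f \<in> borel_measurable M" "\<And>x. x \<in> space M \<Longrightarrow> \<bar>f x\<bar> \<le> g x"
  shows "integrable M f"
proof (rule Bochner_Integration.integrable_bound[OF assms(1) assms(2)])
  show "AE x in M. norm (f x) \<le> norm (g x)"
    by (intro AE_I2) (use assms(3) in force)
qed

lemma conj_convex:
  fixes f :: "'a::euclidean_space \<Rightarrow> real"
  assumes bdd: "\<And>w. bdd_above (range (\<lambda>y. w \<bullet> y - f y))"
  shows "convex_on UNIV (convex_conj f)"
proof (rule convex_onI)
  fix t :: real and x y :: 'a assume t: "0 < t" "t < 1"
  show "convex_conj f ((1 - t) *\<^sub>R x + t *\<^sub>R y) \<le> (1 - t) * convex_conj f x + t * convex_conj f y"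
    unfolding convex_conj_def
  proof (rule cSUP_least)
    fix z
    have "((1 - t) *\<^sub>R x + t *\<^sub>R y) \<bullet> z - f z = (1 - t) * (x \<bullet> z - f z) + t * (y \<bullet> z - f z)"
      by (simp add: inner_add_left algebra_simps)
    also have "\<dots> \<le> (1 - t) * (SUP z. x \<bullet> z - f z) + t * (SUP z. y \<bullet> z - f z)"
      using t by (intro add_mono mult_left_mono cSUP_upper bdd) auto
    finally show "((1 - t) *\<^sub>R x + t *\<^sub>R y) \<bullet> z - f z \<le> (1 - t) * (SUP z. x \<bullet> z - f z) + t * (SUP z. y \<bullet> z - f z)" .
  qed simp
qed simp

lemma conj_upper:
  assumes "bdd_above (range (\<lambda>y. w \<bullet> y - f y))"
  shows "w \<bullet> y - f y \<le> convex_conj f w"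
  unfolding convex_conj_def using assms by (rule cSUP_upper2) auto

lemma conj_least:
  assumes "\<And>y. w \<bullet> y - f y \<le> c"
  shows "convex_conj f w \<le> c"
  unfolding convex_conj_def using assms by (intro cSUP_least) auto

lemma quad_aux: "(b::real) * c - c^2/2 \<le> b^2/2"
  using sum_squares_ge_zero[of "b - c" 0] by (simp add: power2_eq_square algebra_simps)

locale psiC2 =
  fixes \<psi> :: "'a::euclidean_space \<Rightarrow> real" and a k l :: real
  assumes cont: "continuous_on UNIV \<psi>"
    and lb: "\<And>y. l + (norm y)\<^sup>2 / 2 \<le> \<psi> y"
    and ub: "\<And>y. \<psi> y \<le> a + k * (norm y)\<^sup>2"
begin

abbreviation "S \<equiv> convex_conj \<psi>"

lemma bound_lin: "w \<bullet> y - \<psi> y \<le> (norm w)\<^sup>2 / 2 - l"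
proof -
  have "w \<bullet> y \<le> norm w * norm y" by (rule norm_cauchy_schwarz)
  then show ?thesis using lb[of y] quad_aux[of "norm w" "norm y"] by linarith
qed

lemma S_bdd: "bdd_above (range (\<lambda>y. w \<bullet> y - \<psi> y))"
  using bound_lin by (intro bdd_aboveI2) 

lemma S_ge: "w \<bullet> y - \<psi> y \<le> S w"
  by (rule conj_upper[OF S_bdd])

lemma S_le: "S w \<le> (norm w)\<^sup>2 / 2 - l"
  by (rule conj_least) (rule bound_lin)

lemma S_convex: "convex_on UNIV S"
  by (rule conj_convex[OF S_bdd])

lemma S_cont: "continuous_on UNIV S"
  by (rule convex_on_continuous[OF open_UNIV S_convex])

lemma S_borel[measurable]: "S \<in> borel_measurable borel"
  by (rule borel_measurable_continuous_onI[OF S_cont])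

lemma psi_borel[measurable]: "\<psi> \<in> borel_measurable borel"
  by (rule borel_measurable_continuous_onI[OF cont])

lemma S_abs: "\<bar>S w\<bar> \<le> \<bar>\<psi> 0\<bar> + \<bar>l\<bar> + (norm w)\<^sup>2"
proof -
  have "0 \<le> (norm w)\<^sup>2" by simp
  then show ?thesis unfolding abs_le_iff using S_ge[of w 0, unfolded inner_zero_right] S_le[of w]
      abs_ge_self[of "\<psi> 0"] abs_ge_minus_self[of "\<psi> 0"] abs_ge_self[of l] abs_ge_minus_self[of l]
    by linarith
qed

lemma psi_abs: "\<bar>\<psi> y\<bar> \<le> \<bar>a\<bar> + \<bar>l\<bar> + \<bar>k\<bar> * (norm y)\<^sup>2"
proof -
  have "k * (norm y)\<^sup>2 \<le> \<bar>k\<bar> * (norm y)\<^sup>2" by (intro mult_right_mono) auto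
  moreover have "0 \<le> (norm y)\<^sup>2 / 2" "0 \<le> \<bar>k\<bar> * (norm y)\<^sup>2" by simp_all
  ultimately show ?thesis unfolding abs_le_iff using lb[of y] ub[of y]
      abs_ge_self[of a] abs_ge_minus_self[of a] abs_ge_self[of l] abs_ge_minus_self[of l] by linarith
qed

end



lemma meas_sets_borel: "sets M = sets borel \<Longrightarrow> f \<in> measurable borel N \<Longrightarrow> f \<in> measurable M N"
  by (subst measurable_cong_sets[of M borel N N]) auto

lemma fst_borel[measurable]: "fst \<in> borel_measurable (borel :: ('a::second_countable_topology \<times> 'b::second_countable_topology) measure)"
  using measurable_fst[of "borel::'a measure" "borel::'b measure"] unfolding borel_prod .
lemma snd_borel[measurable]: "snd \<in> borel_measurable (borel :: ('a::second_countable_topology \<times> 'b::second_countable_topology) measure)"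
  using measurable_snd[of "borel::'a measure" "borel::'b measure"] unfolding borel_prod .

lemma P2D: assumes "p \<in> P2"
  shows "prob_space p" "sets p = sets borel" "integrable p (\<lambda>x. (norm x)\<^sup>2)"
  using assms by (auto simp: P2_def)

lemma P2_integrable:
  fixes f :: "'a::euclidean_space \<Rightarrow> real"
  assumes p: "p \<in> P2" and f: "f \<in> borel_measurable borel" and b: "\<And>x. \<bar>f x\<bar> \<le> c + d * (norm x)\<^sup>2"
  shows "integrable p f"
proof -
  interpret prob_space p using P2D[OF p] by simp
  have sp: "sets p = sets borel" using P2D[OF p] by simp
  show ?thesis
  proof (rule integrable_dom)
    show "integrable p (\<lambda>x. c + d * (norm x)\<^sup>2)"
      using P2D(3)[OF p] by (intro Bochner_Integration.integrable_add integrable_mult_right) auto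
    show "f \<in> borel_measurable p" using f sp meas_sets_borel by blast
  qed (rule b)
qed

lemma P2_id_integrable:
  assumes p: "p \<in> P2"
  shows "integrable p (\<lambda>x::'a::euclidean_space. x)"
proof (rule Bochner_Integration.integrable_bound)
  interpret prob_space p using P2D[OF p] by simp
  have sp: "sets p = sets borel" using P2D[OF p] by simp
  show "integrable p (\<lambda>x. 1 + (norm x)\<^sup>2)"
    using P2D(3)[OF p] by auto
  show "(\<lambda>x. x) \<in> borel_measurable p" using sp meas_sets_borel by (metis measurable_ident_sets)
  show "AE x in p. norm x \<le> norm (1 + (norm x)\<^sup>2)"
  proof (intro AE_I2)
    fix x :: 'a
    have "norm x - (norm x)\<^sup>2/2 \<le> 1/2" using quad_aux[of 1 "norm x"] by simp
    then have "norm x \<le> 1 + (norm x)\<^sup>2" using zero_le_power2[of "norm x"] by linarith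
    then show "norm x \<le> norm (1 + (norm x)\<^sup>2)" by simp
  qed
qed

lemma norm_add_sq: "(norm (x + y :: 'a::real_normed_vector))\<^sup>2 \<le> 2 * (norm x)\<^sup>2 + 2 * (norm y)\<^sup>2"
proof -
  have "norm (x + y) \<le> norm x + norm y" by (rule norm_triangle_ineq)
  then have "(norm (x + y))\<^sup>2 \<le> (norm x + norm y)\<^sup>2" by (simp add: power_mono)
  also have "\<dots> \<le> 2 * (norm x)\<^sup>2 + 2 * (norm y)\<^sup>2"
    using sum_squares_ge_zero[of "norm x - norm y" 0] by (simp add: power2_eq_square algebra_simps)
  finally show ?thesis .
qed

lemma CplD: assumes "\<pi> \<in> Cpl p q"
  shows "prob_space \<pi>" "sets \<pi> = sets borel" "distr \<pi> borel fst = p" "distr \<pi> borel snd = q"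
  using assms unfolding Cpl_def borel_prod by simp_all

lemma Cpl_fst_meas: "\<pi> \<in> Cpl p q \<Longrightarrow> fst \<in> measurable \<pi> borel"
  by (erule meas_sets_borel[OF CplD(2)]) (rule fst_borel)
lemma Cpl_snd_meas: "\<pi> \<in> Cpl p q \<Longrightarrow> snd \<in> measurable \<pi> borel"
  by (erule meas_sets_borel[OF CplD(2)]) (rule snd_borel)

lemma Cpl_fst_integrable:
  fixes f :: "'a::euclidean_space \<Rightarrow> 'b::{banach, second_countable_topology}"
  assumes "\<pi> \<in> Cpl p q" "f \<in> borel_measurable borel"
  shows "integrable p f \<longleftrightarrow> integrable \<pi> (\<lambda>x. f (fst x))"
    and "integral\<^sup>L p f = (\<integral>x. f (fst x) \<partial>\<pi>)"
  using integrable_distr_eq[OF Cpl_fst_meas[OF assms(1)] assms(2)]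
    integral_distr[OF Cpl_fst_meas[OF assms(1)] assms(2)] CplD(3)[OF assms(1)] by auto

lemma Cpl_snd_integrable:
  fixes f :: "'a::euclidean_space \<Rightarrow> 'b::{banach, second_countable_topology}"
  assumes "\<pi> \<in> Cpl p q" "f \<in> borel_measurable borel"
  shows "integrable q f \<longleftrightarrow> integrable \<pi> (\<lambda>x. f (snd x))"
    and "integral\<^sup>L q f = (\<integral>x. f (snd x) \<partial>\<pi>)"
  using integrable_distr_eq[OF Cpl_snd_meas[OF assms(1)] assms(2)]
    integral_distr[OF Cpl_snd_meas[OF assms(1)] assms(2)] CplD(4)[OF assms(1)] by auto

lemma Cpl_borel:
  assumes "\<pi> \<in> Cpl p q" "f \<in> borel_measurable borel"
  shows "f \<in> borel_measurable \<pi>"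
  using assms meas_sets_borel[OF CplD(2)[OF assms(1)]] by blast

lemma Cpl_inner_integrable:
  fixes p q :: "'a::euclidean_space measure"
  assumes \<pi>: "\<pi> \<in> Cpl p q" and p: "p \<in> P2" and q: "q \<in> P2"
  shows "integrable \<pi> (\<lambda>yz. fst yz \<bullet> snd yz)"
proof (rule integrable_dom)
  show "integrable \<pi> (\<lambda>yz. (norm (fst yz))\<^sup>2 + (norm (snd yz))\<^sup>2)"
  proof (rule Bochner_Integration.integrable_add)
    have m: "(\<lambda>x::'a. (norm x)\<^sup>2) \<in> borel_measurable borel" by measurable
    show "integrable \<pi> (\<lambda>x. (norm (fst x))\<^sup>2)"
      using Cpl_fst_integrable(1)[OF \<pi> m] P2D(3)[OF p] by simp
    show "integrable \<pi> (\<lambda>x. (norm (snd x))\<^sup>2)"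
      using Cpl_snd_integrable(1)[OF \<pi> m] P2D(3)[OF q] by simp
  qed
  show "(\<lambda>yz. fst yz \<bullet> snd yz) \<in> borel_measurable \<pi>"
  proof (rule Cpl_borel[OF \<pi>])
    show "(\<lambda>yz. fst yz \<bullet> snd yz) \<in> borel_measurable (borel :: ('a \<times> 'a) measure)"
      by (intro borel_measurable_continuous_onI continuous_intros)
  qed
  fix yz :: "'a \<times> 'a"
  have "\<bar>fst yz \<bullet> snd yz\<bar> \<le> norm (fst yz) * norm (snd yz)" by (rule Cauchy_Schwarz_ineq2)
  also have "\<dots> \<le> (norm (fst yz))\<^sup>2 + (norm (snd yz))\<^sup>2"
    using quad_aux[of "norm (fst yz)" "norm (snd yz)"] zero_le_power2[of "norm (fst yz)"] zero_le_power2[of "norm (snd yz)"] by linarith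
  finally show "\<bar>fst yz \<bullet> snd yz\<bar> \<le> (norm (fst yz))\<^sup>2 + (norm (snd yz))\<^sup>2" .
qed

lemma Cpl_product:
  fixes p q :: "'a::euclidean_space measure"
  assumes p: "p \<in> P2" and q: "q \<in> P2"
  shows "p \<Otimes>\<^sub>M q \<in> Cpl p q"
proof -
  interpret P: prob_space p using P2D[OF p] by simp
  interpret Q: prob_space q using P2D[OF q] by simp
  have sp: "sets p = sets borel" and sq: "sets q = sets borel" using P2D p q by auto
  have sets: "sets (p \<Otimes>\<^sub>M q) = sets (borel \<Otimes>\<^sub>M borel)"
    by (rule sets_pair_measure_cong[OF sp sq])
  have mf: "fst \<in> measurable (p \<Otimes>\<^sub>M q) borel"
    using measurable_fst[of p q] measurable_cong_sets[of "p \<Otimes>\<^sub>M q" "p \<Otimes>\<^sub>M q" p borel] sp by simp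
  have ms: "snd \<in> measurable (p \<Otimes>\<^sub>M q) borel"
    using measurable_snd[of p q] measurable_cong_sets[of "p \<Otimes>\<^sub>M q" "p \<Otimes>\<^sub>M q" q borel] sq by simp
  have "distr (p \<Otimes>\<^sub>M q) borel fst = p"
  proof (rule measure_eqI)
    show "sets (distr (p \<Otimes>\<^sub>M q) borel fst) = sets p" using sp by simp
    fix A assume "A \<in> sets (distr (p \<Otimes>\<^sub>M q) borel fst)"
    then have A: "A \<in> sets p" using sp by simp
    have "fst -` A \<inter> space (p \<Otimes>\<^sub>M q) = A \<times> space q"
      using sets.sets_into_space[OF A] by (auto simp: space_pair_measure)
    then show "emeasure (distr (p \<Otimes>\<^sub>M q) borel fst) A = emeasure p A"
      using A by (simp add: emeasure_distr[OF mf] sp Q.emeasure_pair_measure_Times Q.emeasure_space_1)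
  qed
  moreover have "distr (p \<Otimes>\<^sub>M q) borel snd = q"
  proof (rule measure_eqI)
    show "sets (distr (p \<Otimes>\<^sub>M q) borel snd) = sets q" using sq by simp
    fix A assume "A \<in> sets (distr (p \<Otimes>\<^sub>M q) borel snd)"
    then have A: "A \<in> sets q" using sq by simp
    have "snd -` A \<inter> space (p \<Otimes>\<^sub>M q) = space p \<times> A"
      using sets.sets_into_space[OF A] by (auto simp: space_pair_measure)
    then show "emeasure (distr (p \<Otimes>\<^sub>M q) borel snd) A = emeasure q A"
      using A by (simp add: emeasure_distr[OF ms] sq Q.emeasure_pair_measure_Times P.emeasure_space_1)
  qed
  ultimately show ?thesis
    using sets prob_space_pair[OF P.prob_space_axioms Q.prob_space_axioms] by (auto simp: Cpl_def)
qed



locale Pset = psiC2 +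
  fixes q :: "'a measure"
  assumes q: "q \<in> P2"
begin

abbreviation "G \<equiv> conv_meas S q"
abbreviation "H \<equiv> convex_conj G"
abbreviation "V \<equiv> phi_psi q \<psi>"
definition "F p = (\<integral>y. \<psi> y \<partial>p) - MCov p q"

lemma G_int: "integrable q (\<lambda>z. S (w + z))"
proof (rule P2_integrable[OF q])
  show "(\<lambda>z. S (w + z)) \<in> borel_measurable borel" by measurable
  fix z
  have "\<bar>S (w + z)\<bar> \<le> \<bar>\<psi> 0\<bar> + \<bar>l\<bar> + (norm (w + z))\<^sup>2" by (rule S_abs)
  also have "\<dots> \<le> (\<bar>\<psi> 0\<bar> + \<bar>l\<bar> + 2 * (norm w)\<^sup>2) + 2 * (norm z)\<^sup>2"
    using norm_add_sq[of w z] by linarith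
  finally show "\<bar>S (w + z)\<bar> \<le> (\<bar>\<psi> 0\<bar> + \<bar>l\<bar> + 2 * (norm w)\<^sup>2) + 2 * (norm z)\<^sup>2" .
qed

lemma psi_int: "p \<in> P2 \<Longrightarrow> integrable p \<psi>"
  by (rule P2_integrable[OF _ psi_borel psi_abs])

lemma Cpl_bound:
  assumes p: "p \<in> P2" and \<pi>: "\<pi> \<in> Cpl p q"
  shows "(\<integral>yz. fst yz \<bullet> snd yz \<partial>\<pi>) \<le> (\<integral>y. \<psi> y \<partial>p) - w \<bullet> barycenter p + G w"
proof -
  have i1: "integrable \<pi> (\<lambda>x. \<psi> (fst x))"
    using Cpl_fst_integrable(1)[OF \<pi> psi_borel] psi_int[OF p] by simp
  have m2: "(\<lambda>z. S (w + z)) \<in> borel_measurable borel" by measurable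
  have i2: "integrable \<pi> (\<lambda>x. S (w + snd x))"
    using Cpl_snd_integrable(1)[OF \<pi> m2] G_int by simp
  have m3: "(\<lambda>y. w \<bullet> y) \<in> borel_measurable borel" by measurable
  have i3p: "integrable p (\<lambda>y. w \<bullet> y)"
    by (rule integrable_inner_right[OF P2_id_integrable[OF p]])
  have i3: "integrable \<pi> (\<lambda>x. w \<bullet> fst x)"
    using Cpl_fst_integrable(1)[OF \<pi> m3] i3p by simp
  have i4: "integrable \<pi> (\<lambda>yz. fst yz \<bullet> snd yz)"
    by (rule Cpl_inner_integrable[OF \<pi> p q])
  have pw: "fst x \<bullet> snd x \<le> \<psi> (fst x) + S (w + snd x) - w \<bullet> fst x" for x
  proof -
    have "(w + snd x) \<bullet> fst x = w \<bullet> fst x + fst x \<bullet> snd x" by (simp add: inner_add_left inner_commute[of "snd x"])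
    then show ?thesis using S_ge[of "w + snd x" "fst x"] by linarith
  qed
  have "(\<integral>yz. fst yz \<bullet> snd yz \<partial>\<pi>) \<le> (\<integral>x. \<psi> (fst x) + S (w + snd x) - w \<bullet> fst x \<partial>\<pi>)"
    using i1 i2 i3 i4 pw by (intro integral_mono) auto
  also have "\<dots> = (\<integral>x. \<psi> (fst x) \<partial>\<pi>) + (\<integral>x. S (w + snd x) \<partial>\<pi>) - (\<integral>x. w \<bullet> fst x \<partial>\<pi>)"
    using i1 i2 i3 by simp
  also have "(\<integral>x. \<psi> (fst x) \<partial>\<pi>) = (\<integral>y. \<psi> y \<partial>p)"
    using Cpl_fst_integrable(2)[OF \<pi> psi_borel] by simp
  also have "(\<integral>x. S (w + snd x) \<partial>\<pi>) = G w"
    using Cpl_snd_integrable(2)[OF \<pi> m2] by (simp add: conv_meas_def)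
  also have "(\<integral>x. w \<bullet> fst x \<partial>\<pi>) = (\<integral>y. w \<bullet> y \<partial>p)"
    using Cpl_fst_integrable(2)[OF \<pi> m3] by simp
  also have "\<dots> = w \<bullet> barycenter p"
    unfolding barycenter_def using P2_id_integrable[OF p] by simp
  finally show ?thesis by simp
qed

lemma Cpl_ne: "p \<in> P2 \<Longrightarrow> Cpl p q \<noteq> {}"
  using Cpl_product[OF _ q] by blast

lemma MCov_le:
  assumes p: "p \<in> P2"
  shows "MCov p q \<le> (\<integral>y. \<psi> y \<partial>p) - w \<bullet> barycenter p + G w"
  unfolding MCov_def using Cpl_ne[OF p] Cpl_bound[OF p] by (intro cSup_least) auto

lemma MCov_ge:
  assumes p: "p \<in> P2" and \<pi>: "\<pi> \<in> Cpl p q"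
  shows "(\<integral>yz. fst yz \<bullet> snd yz \<partial>\<pi>) \<le> MCov p q"
  unfolding MCov_def
proof (rule cSup_upper)
  show "bdd_above ((\<lambda>\<pi>. \<integral>yz. fst yz \<bullet> snd yz \<partial>\<pi>) ` Cpl p q)"
    using Cpl_bound[OF p, of _ 0] by (intro bdd_aboveI2) auto
qed (use \<pi> in auto)

lemma F_ge: "p \<in> P2 \<Longrightarrow> w \<bullet> barycenter p - G w \<le> F p"
  using MCov_le[of p w] by (simp add: F_def)

lemma return_P2x: "return borel x \<in> P2x x"
proof -
  have "integrable (return borel x) (\<lambda>x. (norm x)\<^sup>2)"
    unfolding integrable_iff_bounded by (simp add: nn_integral_return)
  moreover have "barycenter (return borel x) = x"
    unfolding barycenter_def by (simp add: integral_return)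
  ultimately show ?thesis
    by (auto simp: P2x_def P2_def prob_space_return)
qed

lemma V_eq: "V x = Inf (F ` P2x x)"
  by (simp add: phi_psi_def F_def)

lemma F_bdd: "bdd_below (F ` P2x x)"
  using F_ge[of _ 0] by (intro bdd_belowI2[where m="- G 0"]) (auto simp: P2x_def)

lemma V_le: "p \<in> P2x x \<Longrightarrow> V x \<le> F p"
  unfolding V_eq by (rule cInf_lower[OF _ F_bdd]) auto

lemma H_le_V: "H x \<le> V x"
  unfolding V_eq
proof (rule cInf_greatest)
  show "F ` P2x x \<noteq> {}" using return_P2x by blast
  fix r assume "r \<in> F ` P2x x"
  then obtain p where p: "p \<in> P2x x" and r: "r = F p" by auto
  show "H x \<le> r" unfolding r
    using F_ge[of p] p by (intro conj_least) (auto simp: P2x_def inner_commute)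
qed

lemma H_bdd: "bdd_above (range (\<lambda>w. x \<bullet> w - G w))"
  using F_ge[of "return borel x"] return_P2x[of x] by (intro bdd_aboveI2[where M="F (return borel x)"]) (auto simp: P2x_def inner_commute)

end



lemma meas_cong_src:
  assumes "sets M = sets M'" "f \<in> measurable M N" shows "f \<in> measurable M' N"
  using assms(2) unfolding measurable_cong_sets[OF assms(1) refl[of "sets N"]] .

definition mix :: "real \<Rightarrow> 'b measure \<Rightarrow> 'b measure \<Rightarrow> 'b measure" where
  "mix u A B = measure_pmf (bernoulli_pmf u) \<bind> (\<lambda>b. if b then A else B)"

context
  fixes A B N :: "'b measure" and u :: real
  assumes PA: "prob_space A" and PB: "prob_space B" and SA: "sets A = sets N" and SB: "sets B = sets N"
    and u: "0 \<le> u" "u \<le> 1"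
begin

lemma mix_kernel: "(\<lambda>b. if b then A else B) \<in> measurable (measure_pmf (bernoulli_pmf u)) (subprob_algebra N)"
proof -
  have a: "A \<in> space (subprob_algebra N)" using PA SA
    unfolding space_subprob_algebra by (simp add: prob_space_imp_subprob_space)
  have b: "B \<in> space (subprob_algebra N)" using PB SB
    unfolding space_subprob_algebra by (simp add: prob_space_imp_subprob_space)
  have "(\<lambda>b. if b then A else B) \<in> UNIV \<rightarrow> space (subprob_algebra N)" using a b by auto
  then have m: "(\<lambda>b. if b then A else B) \<in> measurable (count_space UNIV) (subprob_algebra N)"
    by (rule measurable_count_space_eq1[THEN iffD2])
  have eq: "measurable (measure_pmf (bernoulli_pmf u)) (subprob_algebra N) = measurable (count_space UNIV) (subprob_algebra N)"
    by (rule measurable_cong_sets[OF sets_measure_pmf_count_space refl])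
  show ?thesis unfolding eq by (rule m)
qed

lemma mix_sets: "sets (mix u A B) = sets N"
  unfolding mix_def using SA SB by (intro sets_bind) auto

lemma mix_space: "space (mix u A B) = space N"
  using mix_sets by (rule sets_eq_imp_space_eq)

lemma mix_nn:
  assumes f: "f \<in> borel_measurable N"
  shows "(\<integral>\<^sup>+x. f x \<partial>mix u A B) = ennreal u * (\<integral>\<^sup>+x. f x \<partial>A) + ennreal (1 - u) * (\<integral>\<^sup>+x. f x \<partial>B)"
proof -
  have "(\<integral>\<^sup>+x. f x \<partial>mix u A B) = (\<integral>\<^sup>+b. (\<integral>\<^sup>+x. f x \<partial>(if b then A else B)) \<partial>measure_pmf (bernoulli_pmf u))"
    unfolding mix_def by (rule nn_integral_bind[OF f mix_kernel])
  also have "\<dots> = (\<integral>\<^sup>+b. ennreal (pmf (bernoulli_pmf u) b) * (\<integral>\<^sup>+x. f x \<partial>(if b then A else B)) \<partial>count_space UNIV)"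
    by (rule nn_integral_measure_pmf)
  also have "\<dots> = (\<Sum>b\<in>UNIV. ennreal (pmf (bernoulli_pmf u) b) * (\<integral>\<^sup>+x. f x \<partial>(if b then A else B)))"
    by (rule nn_integral_count_space_finite) simp
  also have "\<dots> = ennreal u * (\<integral>\<^sup>+x. f x \<partial>A) + ennreal (1 - u) * (\<integral>\<^sup>+x. f x \<partial>B)"
    using u by (simp add: UNIV_bool add.commute)
  finally show ?thesis .
qed

lemma mix_prob: "prob_space (mix u A B)"
proof (rule prob_spaceI)
  have "emeasure (mix u A B) (space (mix u A B)) = (\<integral>\<^sup>+x. 1 \<partial>mix u A B)"
    by simp
  also have "\<dots> = ennreal u * (\<integral>\<^sup>+x. 1 \<partial>A) + ennreal (1 - u) * (\<integral>\<^sup>+x. 1 \<partial>B)"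
    by (rule mix_nn) simp
  also have "\<dots> = 1"
    using prob_space.emeasure_space_1[OF PA] prob_space.emeasure_space_1[OF PB] u
    by (simp flip: ennreal_plus)
  finally show "emeasure (mix u A B) (space (mix u A B)) = 1" .
qed

lemma mix_integrable:
  fixes f :: "'b \<Rightarrow> 'c::{banach, second_countable_topology}"
  assumes iA: "integrable A f" and iB: "integrable B f"
  shows "integrable (mix u A B) f"
proof -
  have fN: "f \<in> borel_measurable N"
    by (rule meas_cong_src[OF SA borel_measurable_integrable[OF iA]])
  have fM: "f \<in> borel_measurable (mix u A B)"
    by (rule meas_cong_src[OF mix_sets[symmetric] fN])
  have "(\<integral>\<^sup>+x. ennreal (norm (f x)) \<partial>mix u A B) = ennreal u * (\<integral>\<^sup>+x. ennreal (norm (f x)) \<partial>A) + ennreal (1 - u) * (\<integral>\<^sup>+x. ennreal (norm (f x)) \<partial>B)"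
    using fN by (intro mix_nn) measurable
  also have "\<dots> < \<infinity>"
    using iA iB unfolding integrable_iff_bounded
    by (simp add: ennreal_mult_less_top ennreal_mult_eq_top_iff top.not_eq_extremum[symmetric])
  finally show ?thesis using fM unfolding integrable_iff_bounded by simp
qed

lemma mix_integral:
  fixes f :: "'b \<Rightarrow> real"
  assumes iA: "integrable A f" and iB: "integrable B f"
  shows "(\<integral>x. f x \<partial>mix u A B) = u * (\<integral>x. f x \<partial>A) + (1 - u) * (\<integral>x. f x \<partial>B)"
proof -
  have fN: "f \<in> borel_measurable N"
    by (rule meas_cong_src[OF SA borel_measurable_integrable[OF iA]])
  have iM: "integrable (mix u A B) f" by (rule mix_integrable[OF iA iB])
  have p: "(\<integral>\<^sup>+x. ennreal (f x) \<partial>mix u A B) = ennreal u * (\<integral>\<^sup>+x. ennreal (f x) \<partial>A) + ennreal (1 - u) * (\<integral>\<^sup>+x. ennreal (f x) \<partial>B)"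
    using fN by (intro mix_nn) measurable
  have n: "(\<integral>\<^sup>+x. ennreal (- f x) \<partial>mix u A B) = ennreal u * (\<integral>\<^sup>+x. ennreal (- f x) \<partial>A) + ennreal (1 - u) * (\<integral>\<^sup>+x. ennreal (- f x) \<partial>B)"
    using fN by (intro mix_nn) measurable
  have fin: "(\<integral>\<^sup>+x. ennreal (f x) \<partial>A) < top" "(\<integral>\<^sup>+x. ennreal (- f x) \<partial>A) < top"
     "(\<integral>\<^sup>+x. ennreal (f x) \<partial>B) < top" "(\<integral>\<^sup>+x. ennreal (- f x) \<partial>B) < top"
    using iA iB unfolding real_integrable_def by (auto simp: top.not_eq_extremum)
  have e: "enn2real (ennreal u * X + ennreal (1 - u) * Y) = u * enn2real X + (1 - u) * enn2real Y"
    if "X < top" "Y < top" for X Y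
    using that u by (simp add: enn2real_plus ennreal_mult_less_top enn2real_mult)
  show ?thesis
    unfolding real_lebesgue_integral_def[OF iM] real_lebesgue_integral_def[OF iA] real_lebesgue_integral_def[OF iB]
      p n e[OF fin(1,3)] e[OF fin(2,4)]
    by (simp add: algebra_simps)
qed

lemma mix_distr:
  assumes f: "f \<in> measurable N K"
  shows "distr (mix u A B) K f = mix u (distr A K f) (distr B K f)"
  unfolding mix_def
  by (subst distr_bind[OF mix_kernel _ f]) (auto intro!: bind_cong)

end

lemma mix_integral_id:
  fixes A B :: "'a::euclidean_space measure"
  assumes PA: "prob_space A" and PB: "prob_space B" and SA: "sets A = sets borel" and SB: "sets B = sets borel"
    and u: "0 \<le> u" "u \<le> 1"
  assumes iA: "integrable A (\<lambda>x. x)" and iB: "integrable B (\<lambda>x. x)"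
  shows "(\<integral>x. x \<partial>mix u A B) = u *\<^sub>R (\<integral>x. x \<partial>A) + (1 - u) *\<^sub>R (\<integral>x. x \<partial>B)"
proof (rule euclidean_eqI)
  fix b :: 'a assume "b \<in> Basis"
  have iM: "integrable (mix u A B) (\<lambda>x. x)" by (rule mix_integrable[OF PA PB SA SB u iA iB])
  have "(\<integral>x. x \<partial>mix u A B) \<bullet> b = (\<integral>x. x \<bullet> b \<partial>mix u A B)"
    using iM by simp
  also have "\<dots> = u * (\<integral>x. x \<bullet> b \<partial>A) + (1 - u) * (\<integral>x. x \<bullet> b \<partial>B)"
    by (rule mix_integral[OF PA PB SA SB u]) (auto intro: integrable_inner_left iA iB)
  also have "\<dots> = (u *\<^sub>R (\<integral>x. x \<partial>A) + (1 - u) *\<^sub>R (\<integral>x. x \<partial>B)) \<bullet> b"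
    using iA iB by (simp add: inner_add_left)
  finally show "(\<integral>x. x \<partial>mix u A B) \<bullet> b = (u *\<^sub>R (\<integral>x. x \<partial>A) + (1 - u) *\<^sub>R (\<integral>x. x \<partial>B)) \<bullet> b" .
qed

lemma mix_same: "prob_space A \<Longrightarrow> mix u A A = A"
  unfolding mix_def
  by (simp add: bind_const' prob_space_measure_pmf prob_space_imp_subprob_space)



context Pset
begin

lemma V_convex: "convex_on UNIV V"
proof (rule convex_onI)
  fix t :: real and x1 x2 :: 'a assume t: "0 < t" "t < 1"
  define u where "u = 1 - t"
  have u: "0 \<le> u" "u \<le> 1" using t by (auto simp: u_def)
  have key: "V ((1 - t) *\<^sub>R x1 + t *\<^sub>R x2) \<le> (1 - t) * V x1 + t * V x2 + 2 * e" if e: "e > 0" for e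
  proof -
    have ne: "F ` P2x x \<noteq> {}" for x using return_P2x by blast
    obtain p1 where p1: "p1 \<in> P2x x1" "F p1 < V x1 + e"
      using cInf_lessD[OF ne[of x1], of "V x1 + e"] e unfolding V_eq by auto
    obtain p2 where p2: "p2 \<in> P2x x2" "F p2 < V x2 + e"
      using cInf_lessD[OF ne[of x2], of "V x2 + e"] e unfolding V_eq by auto
    have P1: "p1 \<in> P2" and P2: "p2 \<in> P2" using p1 p2 by (auto simp: P2x_def)
    have cne: "(\<lambda>\<pi>. \<integral>yz. fst yz \<bullet> snd yz \<partial>\<pi>) ` Cpl p q \<noteq> {}" if "p \<in> P2" for p
      using Cpl_ne[OF that] by blast
    obtain \<pi>1 where \<pi>1: "\<pi>1 \<in> Cpl p1 q" "MCov p1 q - e < (\<integral>yz. fst yz \<bullet> snd yz \<partial>\<pi>1)"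
      using less_cSupD[OF cne[OF P1], of "MCov p1 q - e"] e unfolding MCov_def by auto
    obtain \<pi>2 where \<pi>2: "\<pi>2 \<in> Cpl p2 q" "MCov p2 q - e < (\<integral>yz. fst yz \<bullet> snd yz \<partial>\<pi>2)"
      using less_cSupD[OF cne[OF P2], of "MCov p2 q - e"] e unfolding MCov_def by auto
    define p where "p = mix u p1 p2"
    define \<pi> where "\<pi> = mix u \<pi>1 \<pi>2"
    note P1D = P2D[OF P1] and P2D' = P2D[OF P2]
    have C1: "prob_space \<pi>1" "sets \<pi>1 = sets (borel \<Otimes>\<^sub>M borel)" "distr \<pi>1 borel fst = p1" "distr \<pi>1 borel snd = q"
      using \<pi>1 by (auto simp: Cpl_def)
    have C2: "prob_space \<pi>2" "sets \<pi>2 = sets (borel \<Otimes>\<^sub>M borel)" "distr \<pi>2 borel fst = p2" "distr \<pi>2 borel snd = q"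
      using \<pi>2 by (auto simp: Cpl_def)
    have pP2: "p \<in> P2"
      unfolding P2_def p_def
      using mix_prob[OF P1D(1) P2D'(1) P1D(2) P2D'(2) u] mix_sets[OF P1D(1) P2D'(1) P1D(2) P2D'(2) u]
        mix_integrable[OF P1D(1) P2D'(1) P1D(2) P2D'(2) u P1D(3) P2D'(3)] by auto
    have bp: "barycenter p = (1 - t) *\<^sub>R x1 + t *\<^sub>R x2"
      unfolding barycenter_def p_def
      using mix_integral_id[OF P1D(1) P2D'(1) P1D(2) P2D'(2) u P2_id_integrable[OF P1] P2_id_integrable[OF P2]]
        p1 p2 by (simp add: P2x_def barycenter_def u_def)
    have pP2x: "p \<in> P2x ((1 - t) *\<^sub>R x1 + t *\<^sub>R x2)" using pP2 bp by (simp add: P2x_def)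
    have mfst: "fst \<in> measurable (borel \<Otimes>\<^sub>M borel) (borel :: 'a measure)" by (rule measurable_fst)
    have msnd: "snd \<in> measurable (borel \<Otimes>\<^sub>M borel) (borel :: 'a measure)" by (rule measurable_snd)
    have qP: "prob_space q" using P2D[OF q] by simp
    have \<pi>C: "\<pi> \<in> Cpl p q"
      unfolding Cpl_def \<pi>_def
      using mix_prob[OF C1(1) C2(1) C1(2) C2(2) u] mix_sets[OF C1(1) C2(1) C1(2) C2(2) u]
        mix_distr[OF C1(1) C2(1) C1(2) C2(2) u mfst] mix_distr[OF C1(1) C2(1) C1(2) C2(2) u msnd]
        C1(3,4) C2(3,4) mix_same[OF qP]
      by (simp add: p_def)
    have "V ((1 - t) *\<^sub>R x1 + t *\<^sub>R x2) \<le> F p" by (rule V_le[OF pP2x])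
    also have "\<dots> \<le> (\<integral>y. \<psi> y \<partial>p) - (\<integral>yz. fst yz \<bullet> snd yz \<partial>\<pi>)"
      using MCov_ge[OF pP2 \<pi>C] by (simp add: F_def)
    also have "(\<integral>y. \<psi> y \<partial>p) = u * (\<integral>y. \<psi> y \<partial>p1) + (1 - u) * (\<integral>y. \<psi> y \<partial>p2)"
      unfolding p_def by (rule mix_integral[OF P1D(1) P2D'(1) P1D(2) P2D'(2) u psi_int[OF P1] psi_int[OF P2]])
    also have "(\<integral>yz. fst yz \<bullet> snd yz \<partial>\<pi>) = u * (\<integral>yz. fst yz \<bullet> snd yz \<partial>\<pi>1) + (1 - u) * (\<integral>yz. fst yz \<bullet> snd yz \<partial>\<pi>2)"
      unfolding \<pi>_def by (rule mix_integral[OF C1(1) C2(1) C1(2) C2(2) u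
          Cpl_inner_integrable[OF \<pi>1(1) P1 q] Cpl_inner_integrable[OF \<pi>2(1) P2 q]])
    finally have *: "V ((1 - t) *\<^sub>R x1 + t *\<^sub>R x2) \<le> u * ((\<integral>y. \<psi> y \<partial>p1) - (\<integral>yz. fst yz \<bullet> snd yz \<partial>\<pi>1))
        + (1 - u) * ((\<integral>y. \<psi> y \<partial>p2) - (\<integral>yz. fst yz \<bullet> snd yz \<partial>\<pi>2))"
      by (simp add: algebra_simps)
    have a1: "(\<integral>y. \<psi> y \<partial>p1) - (\<integral>yz. fst yz \<bullet> snd yz \<partial>\<pi>1) \<le> V x1 + 2 * e"
      using p1(2) \<pi>1(2) by (simp add: F_def)
    have a2: "(\<integral>y. \<psi> y \<partial>p2) - (\<integral>yz. fst yz \<bullet> snd yz \<partial>\<pi>2) \<le> V x2 + 2 * e"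
      using p2(2) \<pi>2(2) by (simp add: F_def)
    have "u * ((\<integral>y. \<psi> y \<partial>p1) - (\<integral>yz. fst yz \<bullet> snd yz \<partial>\<pi>1)) \<le> u * (V x1 + 2 * e)"
      using a1 u by (intro mult_left_mono) auto
    moreover have "(1 - u) * ((\<integral>y. \<psi> y \<partial>p2) - (\<integral>yz. fst yz \<bullet> snd yz \<partial>\<pi>2)) \<le> (1 - u) * (V x2 + 2 * e)"
      using a2 u by (intro mult_left_mono) auto
    ultimately show ?thesis using * by (simp add: u_def algebra_simps)
  qed
  show "V ((1 - t) *\<^sub>R x1 + t *\<^sub>R x2) \<le> (1 - t) * V x1 + t * V x2"
  proof (rule field_le_epsilon)
    fix e :: real assume "0 < e"
    then show "V ((1 - t) *\<^sub>R x1 + t *\<^sub>R x2) \<le> (1 - t) * V x1 + t * V x2 + e"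
      using key[of "e / 2"] by simp
  qed
qed simp

end



lemma convex_subgrad:
  fixes f :: "'a::euclidean_space \<Rightarrow> real"
  assumes cf: "convex_on UNIV f"
  shows "\<exists>g. \<forall>y. f x + g \<bullet> (y - x) \<le> f y"
proof -
  define E where "E = {z :: 'a \<times> real. f (fst z) \<le> snd z}"
  have cE: "convex E"
  proof (rule convexI)
    fix z1 z2 :: "'a \<times> real" and u v :: real
    assume z: "z1 \<in> E" "z2 \<in> E" and uv: "0 \<le> u" "0 \<le> v" "u + v = 1"
    have u: "u = 1 - v" using uv by simp
    have "f (u *\<^sub>R fst z1 + v *\<^sub>R fst z2) \<le> u * f (fst z1) + v * f (fst z2)"
      using convex_onD[OF cf, of v "fst z1" "fst z2"] uv unfolding u by auto
    also have "\<dots> \<le> u * snd z1 + v * snd z2"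
      using z uv by (intro add_mono mult_left_mono) (auto simp: E_def)
    finally show "u *\<^sub>R z1 + v *\<^sub>R z2 \<in> E" by (simp add: E_def)
  qed
  have xE: "(x, f x) \<in> E" by (simp add: E_def)
  have notin: "(x, f x) \<notin> rel_interior E"
  proof
    assume "(x, f x) \<in> rel_interior E"
    then obtain e where e: "e > 0" "cball (x, f x) e \<inter> affine hull E \<subseteq> E"
      unfolding mem_rel_interior_cball by blast
    have z1: "(x, f x + e) \<in> E" using e by (simp add: E_def)
    have "(2::real) *\<^sub>R (x, f x) + (- 1) *\<^sub>R (x, f x + e) \<in> affine hull E"
      by (rule mem_affine[OF affine_affine_hull hull_inc[OF xE] hull_inc[OF z1]]) simp
    moreover have "(2::real) *\<^sub>R (x, f x) + (- 1) *\<^sub>R (x, f x + e) = (x, f x - e)"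
      by (simp add: algebra_simps scaleR_2)
    moreover have "(x, f x - e) \<in> cball (x, f x) e"
      using e by (simp add: dist_Pair_Pair dist_real_def)
    ultimately have "(x, f x - e) \<in> E" using e by auto
    then show False using e by (simp add: E_def)
  qed
  obtain a where a: "a \<noteq> 0" "\<And>y. y \<in> E \<Longrightarrow> a \<bullet> (x, f x) \<le> a \<bullet> y"
    using supporting_hyperplane_rel_boundary[OF cE xE notin] by metis
  obtain a1 a2 where a12: "a = (a1, a2)" by (cases a)
  have ineq: "a1 \<bullet> x + a2 * f x \<le> a1 \<bullet> y + a2 * t" if "f y \<le> t" for y t
    using a(2)[of "(y, t)"] that by (simp add: E_def a12)
  have "a2 \<ge> 0" using ineq[of x "f x + 1"] by (simp add: distrib_left)
  moreover have "a2 \<noteq> 0"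
  proof
    assume a20: "a2 = 0"
    have "a1 \<bullet> x \<le> a1 \<bullet> (x - a1)" using ineq[of "x - a1" "f (x - a1)"] a20 by simp
    then have "a1 \<bullet> a1 \<le> 0" by (simp add: inner_diff_right)
    then have "a1 = 0" by (metis inner_gt_zero_iff not_le)
    then show False using a a12 a20 by (simp add: zero_prod_def)
  qed
  ultimately have a2: "a2 > 0" by simp
  show ?thesis
  proof (intro exI allI)
    fix y
    have "a1 \<bullet> x + a2 * f x \<le> a1 \<bullet> y + a2 * f y" by (rule ineq) simp
    then have "a2 * (f x + (- (1 / a2) *\<^sub>R a1) \<bullet> (y - x)) \<le> a2 * f y"
      using a2 by (simp add: inner_diff_right algebra_simps)
    then show "f x + (- (1 / a2) *\<^sub>R a1) \<bullet> (y - x) \<le> f y"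
      using a2 by (simp add: mult_le_cancel_left)
  qed
qed



context Pset
begin

lemma good_map:
  assumes e: "e > 0"
  obtains T where "T \<in> borel_measurable borel"
    "\<And>w. S w - e < w \<bullet> T w - \<psi> (T w)"
proof -
  obtain D :: "'a set" where D: "countable D" "\<And>U. open U \<Longrightarrow> U \<noteq> {} \<Longrightarrow> \<exists>y\<in>D. y \<in> U"
    using countable_dense_exists by blast
  have Dne: "D \<noteq> {}" using D(2)[of UNIV] by auto
  define d where "d = from_nat_into D"
  define P where "P n w \<longleftrightarrow> S w - e < w \<bullet> d n - \<psi> (d n)" for n w
  have exP: "\<exists>n. P n w" for w
  proof -
    have "S w - e < S w" using e by simp
    then obtain y where y: "S w - e < w \<bullet> y - \<psi> y"
      unfolding convex_conj_def using less_cSUP_iff[OF UNIV_not_empty S_bdd] by auto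
    have "open {y. S w - e < w \<bullet> y - \<psi> y}"
      by (intro open_Collect_less continuous_intros cont)
    then obtain y' where "y' \<in> D" "S w - e < w \<bullet> y' - \<psi> y'"
      using D(2)[of "{y. S w - e < w \<bullet> y - \<psi> y}"] y by blast
    then obtain n where "d n = y'"
      using from_nat_into_surj[OF D(1)] unfolding d_def by blast
    then show ?thesis using \<open>S w - e < w \<bullet> y' - \<psi> y'\<close> by (auto simp: P_def)
  qed
  define T where "T w = d (LEAST n. P n w)" for w
  have TP: "S w - e < w \<bullet> T w - \<psi> (T w)" for w
    using LeastI_ex[OF exP[of w]] unfolding T_def P_def .
  have predP: "(\<lambda>w. P n w) \<in> measurable borel (count_space UNIV)" for n
  proof -
    have "Measurable.pred borel (\<lambda>w. S w - e < w \<bullet> d n - \<psi> (d n))" by measurable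
    then show ?thesis unfolding P_def pred_def .
  qed
  have L: "(\<lambda>w. LEAST n. P n w) \<in> measurable borel (count_space UNIV)"
    by (rule measurable_Least[OF predP])
  have dm: "d \<in> measurable (count_space UNIV) borel" by simp
  have "T \<in> borel_measurable borel"
    unfolding T_def using measurable_compose[OF L dm] by (simp add: comp_def)
  then show ?thesis using that TP by blast
qed

lemma good_map_bound:
  assumes "S w - e < w \<bullet> y - \<psi> y"
  shows "(norm y)\<^sup>2 \<le> 4 * (norm w)\<^sup>2 + 4 * \<bar>\<psi> 0 + e - l\<bar>"
proof -
  have s0: "- \<psi> 0 \<le> S w" using S_ge[of w 0] by simp
  have cs: "w \<bullet> y \<le> norm w * norm y" by (rule norm_cauchy_schwarz)
  have q: "norm w * norm y \<le> (norm w)\<^sup>2 + (norm y)\<^sup>2 / 4"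
    using sum_squares_ge_zero[of "norm w - norm y / 2" 0] by (simp add: power2_eq_square algebra_simps)
  have "(norm y)\<^sup>2 / 4 < (norm w)\<^sup>2 + (\<psi> 0 + e - l)"
    using assms s0 cs q lb[of y] by linarith
  then have h2: "(norm y)\<^sup>2 < 4 * (norm w)\<^sup>2 + 4 * (\<psi> 0 + e - l)" by (simp add: field_simps)
  have h3: "4 * (\<psi> 0 + e - l) \<le> 4 * \<bar>\<psi> 0 + e - l\<bar>" by (rule mult_left_mono[OF abs_ge_self]) simp
  define cc where "cc = \<bar>\<psi> 0 + e - l\<bar>"
  show ?thesis using h2 h3 unfolding cc_def[symmetric] by linarith
qed

lemma approx_plan:
  assumes e: "e > 0"
  shows "\<exists>p \<in> P2. G g - e \<le> g \<bullet> barycenter p - F p"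
proof -
  obtain T where Tm: "T \<in> borel_measurable borel" and TP: "\<And>w. S w - e < w \<bullet> T w - \<psi> (T w)"
    using good_map[OF e] by blast
  define c where "c = \<bar>\<psi> 0 + e - l\<bar>"
  define T' where "T' z = T (g + z)" for z
  have T'm: "T' \<in> borel_measurable borel" unfolding T'_def using Tm by measurable
  have sq: "sets q = sets borel" and qP: "prob_space q" and qi: "integrable q (\<lambda>x. (norm x)\<^sup>2)"
    using P2D[OF q] by auto
  interpret Q: prob_space q by (rule qP)
  have T'q: "T' \<in> borel_measurable q" by (rule meas_sets_borel[OF sq T'm])
  have TPz: "S (g + z) - e < (g + z) \<bullet> T' z - \<psi> (T' z)" for z
    using TP[of "g + z"] by (simp add: T'_def)
  have Tb: "(norm (T' z))\<^sup>2 \<le> (8 * (norm g)\<^sup>2 + 4 * c) + 8 * (norm z)\<^sup>2" for z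
    using good_map_bound[OF TPz[of z]] norm_add_sq[of g z] by (simp add: c_def)
  have idq: "(\<lambda>x. x) \<in> borel_measurable q" by (rule meas_sets_borel[OF sq measurable_ident_sets[OF refl]])
  define h where "h z = (T' z, z)" for z
  have hm: "h \<in> measurable q (borel \<Otimes>\<^sub>M borel)"
    unfolding h_def using T'q idq by (intro measurable_Pair) auto
  define p where "p = distr q borel T'"
  define \<pi> where "\<pi> = distr q (borel \<Otimes>\<^sub>M borel) h"
  have nm: "(\<lambda>x::'a. (norm x)\<^sup>2) \<in> borel_measurable borel" by measurable
  have iT2: "integrable q (\<lambda>z. (norm (T' z))\<^sup>2)"
  proof (rule P2_integrable[OF q])
    show "(\<lambda>z. (norm (T' z))\<^sup>2) \<in> borel_measurable borel" using T'm by measurable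
    fix z show "\<bar>(norm (T' z))\<^sup>2\<bar> \<le> (8 * (norm g)\<^sup>2 + 4 * c) + 8 * (norm z)\<^sup>2" using Tb[of z] by simp
  qed
  have pP2: "p \<in> P2"
    unfolding P2_def p_def
    using Q.prob_space_distr[OF T'q] integrable_distr_eq[OF T'q nm] iT2 by simp
  have fstm: "fst \<in> measurable (borel \<Otimes>\<^sub>M borel) (borel :: 'a measure)" by (rule measurable_fst)
  have sndm: "snd \<in> measurable (borel \<Otimes>\<^sub>M borel) (borel :: 'a measure)" by (rule measurable_snd)
  have "distr \<pi> borel fst = p"
    unfolding \<pi>_def p_def by (simp add: distr_distr[OF fstm hm] comp_def h_def)
  moreover have "distr \<pi> borel snd = q"
    unfolding \<pi>_def using distr_id2[of borel q] sq by (simp add: distr_distr[OF sndm hm] comp_def h_def)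
  ultimately have \<pi>C: "\<pi> \<in> Cpl p q"
    unfolding Cpl_def using Q.prob_space_distr[OF hm] by (simp add: \<pi>_def)
  have iS: "integrable q (\<lambda>z. S (g + z))" by (rule G_int)
  have ipsi: "integrable q (\<lambda>z. \<psi> (T' z))"
  proof (rule P2_integrable[OF q])
    show "(\<lambda>z. \<psi> (T' z)) \<in> borel_measurable borel" using T'm by measurable
    fix z
    have "\<bar>\<psi> (T' z)\<bar> \<le> \<bar>a\<bar> + \<bar>l\<bar> + \<bar>k\<bar> * (norm (T' z))\<^sup>2" by (rule psi_abs)
    also have "\<dots> \<le> \<bar>a\<bar> + \<bar>l\<bar> + \<bar>k\<bar> * ((8 * (norm g)\<^sup>2 + 4 * c) + 8 * (norm z)\<^sup>2)"
      using Tb[of z] by (intro add_left_mono mult_left_mono) auto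
    finally show "\<bar>\<psi> (T' z)\<bar> \<le> (\<bar>a\<bar> + \<bar>l\<bar> + \<bar>k\<bar> * (8 * (norm g)\<^sup>2 + 4 * c)) + (8 * \<bar>k\<bar>) * (norm z)\<^sup>2"
      by (simp add: algebra_simps)
  qed
  have iT: "integrable q T'"
  proof (rule Bochner_Integration.integrable_bound)
    show "integrable q (\<lambda>z. 1 + (norm (T' z))\<^sup>2)" using iT2 by simp
    show "T' \<in> borel_measurable q" by (rule T'q)
    show "AE z in q. norm (T' z) \<le> norm (1 + (norm (T' z))\<^sup>2)"
    proof (intro AE_I2)
      fix z
      have "norm (T' z) - (norm (T' z))\<^sup>2/2 \<le> 1/2" using quad_aux[of 1 "norm (T' z)"] by simp
      then have "norm (T' z) \<le> 1 + (norm (T' z))\<^sup>2" using zero_le_power2[of "norm (T' z)"] by linarith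
      then show "norm (T' z) \<le> norm (1 + (norm (T' z))\<^sup>2)" by simp
    qed
  qed
  have iTz: "integrable q (\<lambda>z. T' z \<bullet> z)"
  proof (rule integrable_dom)
    show "integrable q (\<lambda>z. (norm (T' z))\<^sup>2 + (norm z)\<^sup>2)" using iT2 qi by simp
    show "(\<lambda>z. T' z \<bullet> z) \<in> borel_measurable q" using T'q idq by measurable
    fix z
    have "\<bar>T' z \<bullet> z\<bar> \<le> norm (T' z) * norm z" by (rule Cauchy_Schwarz_ineq2)
    also have "\<dots> \<le> (norm (T' z))\<^sup>2 + (norm z)\<^sup>2"
      using quad_aux[of "norm (T' z)" "norm z"] zero_le_power2[of "norm (T' z)"] zero_le_power2[of "norm z"] by linarith
    finally show "\<bar>T' z \<bullet> z\<bar> \<le> (norm (T' z))\<^sup>2 + (norm z)\<^sup>2" .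
  qed
  have igT: "integrable q (\<lambda>z. g \<bullet> T' z)" by (rule integrable_inner_right[OF iT])
  have Ipsi: "(\<integral>y. \<psi> y \<partial>p) = (\<integral>z. \<psi> (T' z) \<partial>q)"
    unfolding p_def by (rule integral_distr[OF T'q psi_borel])
  have Ibar: "barycenter p = (\<integral>z. T' z \<partial>q)"
    unfolding p_def barycenter_def by (rule integral_distr[OF T'q measurable_ident_sets[OF refl]])
  have ipm: "(\<lambda>yz. fst yz \<bullet> snd yz) \<in> borel_measurable (borel \<Otimes>\<^sub>M borel :: ('a \<times> 'a) measure)"
    unfolding borel_prod by (intro borel_measurable_continuous_onI continuous_intros)
  have Icov: "(\<integral>yz. fst yz \<bullet> snd yz \<partial>\<pi>) = (\<integral>z. T' z \<bullet> z \<partial>q)"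
    unfolding \<pi>_def by (simp add: integral_distr[OF hm ipm] h_def)
  have "G g - e = (\<integral>z. S (g + z) - e \<partial>q)"
    using iS by (simp add: conv_meas_def Q.prob_space)
  also have "\<dots> \<le> (\<integral>z. g \<bullet> T' z - \<psi> (T' z) + T' z \<bullet> z \<partial>q)"
  proof (rule integral_mono)
    show "integrable q (\<lambda>z. S (g + z) - e)" using iS by simp
    show "integrable q (\<lambda>z. g \<bullet> T' z - \<psi> (T' z) + T' z \<bullet> z)" using igT ipsi iTz by simp
    fix z
    have "(g + z) \<bullet> T' z = g \<bullet> T' z + T' z \<bullet> z" by (simp add: inner_add_left inner_commute[of z])
    then show "S (g + z) - e \<le> g \<bullet> T' z - \<psi> (T' z) + T' z \<bullet> z" using TPz[of z] by linarith
  qed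
  also have "\<dots> = g \<bullet> (\<integral>z. T' z \<partial>q) - (\<integral>z. \<psi> (T' z) \<partial>q) + (\<integral>z. T' z \<bullet> z \<partial>q)"
    using igT ipsi iTz iT by simp
  also have "\<dots> = g \<bullet> barycenter p - ((\<integral>y. \<psi> y \<partial>p) - (\<integral>yz. fst yz \<bullet> snd yz \<partial>\<pi>))"
    using Ipsi Ibar Icov by simp
  also have "\<dots> \<le> g \<bullet> barycenter p - F p"
    using MCov_ge[OF pP2 \<pi>C] by (simp add: F_def)
  finally show ?thesis using pP2 by blast
qed

lemma V_le_H: "V x \<le> H x"
proof -
  obtain g where sub: "\<And>y. V x + g \<bullet> (y - x) \<le> V y"
    using convex_subgrad[OF V_convex, of x] by blast
  have "V x \<le> g \<bullet> x - G g"
  proof (rule field_le_epsilon)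
    fix e :: real assume e: "0 < e"
    obtain p where p: "p \<in> P2" "G g - e \<le> g \<bullet> barycenter p - F p"
      using approx_plan[OF e] by blast
    have "p \<in> P2x (barycenter p)" using p by (simp add: P2x_def)
    then have "V (barycenter p) \<le> F p" by (rule V_le)
    moreover have "V x + g \<bullet> (barycenter p - x) \<le> V (barycenter p)" by (rule sub)
    ultimately show "V x \<le> g \<bullet> x - G g + e" using p(2) by (simp add: inner_diff_right)
  qed
  also have "\<dots> \<le> H x"
    using conj_upper[OF H_bdd, of x g] by (simp add: inner_commute)
  finally show ?thesis .
qed

lemma V_eq_H: "V x = H x"
  using V_le_H H_le_V by (rule antisym)

end



context psiC2
begin

abbreviation "\<psi>2 \<equiv> convex_conj S"

lemma S_bdd2: "bdd_above (range (\<lambda>w. y \<bullet> w - S w))"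
proof (rule bdd_aboveI2)
  fix w show "y \<bullet> w - S w \<le> \<psi> y" using S_ge[of w y] by (simp add: inner_commute)
qed

lemma psi2_le: "\<psi>2 y \<le> \<psi> y"
proof (rule conj_least)
  fix w show "y \<bullet> w - S w \<le> \<psi> y" using S_ge[of w y] by (simp add: inner_commute)
qed

lemma psi2_ge: "y \<bullet> w - S w \<le> \<psi>2 y"
  by (rule conj_upper[OF S_bdd2])

lemma psi2_lb: "l + (norm y)\<^sup>2 / 2 \<le> \<psi>2 y"
  using psi2_ge[of y y] S_le[of y] by (simp add: power2_norm_eq_inner)

lemma psi2_convex: "convex_on UNIV \<psi>2"
  by (rule conj_convex[OF S_bdd2])

lemma psi2_cont: "continuous_on UNIV \<psi>2"
  by (rule convex_on_continuous[OF open_UNIV psi2_convex])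

lemma psi2_C2: "psiC2 \<psi>2 a k l"
  using psi2_cont psi2_lb psi2_le ub by unfold_locales (auto intro: order_trans)

lemma conj_psi2: "convex_conj \<psi>2 = S"
proof
  fix w
  interpret P2': psiC2 \<psi>2 a k l by (rule psi2_C2)
  show "convex_conj \<psi>2 w = S w"
  proof (rule antisym)
    show "convex_conj \<psi>2 w \<le> S w"
    proof (rule conj_least)
      fix y show "w \<bullet> y - \<psi>2 y \<le> S w" using psi2_ge[of y w] by (simp add: inner_commute)
    qed
    show "S w \<le> convex_conj \<psi>2 w"
    proof (rule conj_least)
      fix y
      have "w \<bullet> y - \<psi> y \<le> w \<bullet> y - \<psi>2 y" using psi2_le[of y] by simp
      also have "\<dots> \<le> convex_conj \<psi>2 w" by (rule P2'.S_ge)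
      finally show "w \<bullet> y - \<psi> y \<le> convex_conj \<psi>2 w" .
    qed
  qed
qed

end

lemma C2_psiC2: "\<psi> \<in> C2 \<Longrightarrow> \<exists>a k l. psiC2 \<psi> a k l"
  unfolding C2_def psiC2_def by blast

lemma psiC2_C2: "psiC2 \<psi> a k l \<Longrightarrow> \<psi> \<in> C2"
  unfolding C2_def psiC2_def by blast

theorem proposition2p7:
  fixes \<mu> \<nu> q :: "'a::euclidean_space measure"
  assumes "\<mu> \<in> P2" and "\<nu> \<in> P2" and "q \<in> P2"
    and "convex_order \<mu> \<nu>"
    and "no_mass_small_sets q"
  shows "D_tilde q \<mu> \<nu> =
    (INF \<psi> \<in> {\<psi> \<in> C2. convex_on UNIV \<psi>}.
       ereal ((\<integral>y. \<psi> y \<partial>\<nu>) - (\<integral>x. convex_conj (conv_meas (convex_conj \<psi>) q) x \<partial>\<mu>)))"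
proof -
  note q = assms(3) and \<nu> = assms(2)
  define \<Phi> where "\<Phi> \<psi> = ereal ((\<integral>y. \<psi> y \<partial>\<nu>) - (\<integral>x. convex_conj (conv_meas (convex_conj \<psi>) q) x \<partial>\<mu>))"
    for \<psi> :: "'a \<Rightarrow> real"
  have key: "phi_psi q \<psi> = convex_conj (conv_meas (convex_conj \<psi>) q)" if \<psi>C: "\<psi> \<in> C2" for \<psi>
  proof -
    obtain a k l where pc: "psiC2 \<psi> a k l" using C2_psiC2[OF \<psi>C] by blast
    interpret P: Pset \<psi> a k l q using pc q by (simp add: Pset_def Pset_axioms_def)
    show ?thesis using P.V_eq_H by blast
  qed
  have lhs: "D_tilde q \<mu> \<nu> = (INF \<psi> \<in> C2. \<Phi> \<psi>)"
    unfolding D_tilde_def \<Phi>_def by (intro INF_cong refl) (simp add: key)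
  have improve: "\<exists>\<psi>' \<in> {\<psi> \<in> C2. convex_on UNIV \<psi>}. \<Phi> \<psi>' \<le> \<Phi> \<psi>" if \<psi>C: "\<psi> \<in> C2" for \<psi>
  proof -
    obtain a k l where pc: "psiC2 \<psi> a k l" using C2_psiC2[OF \<psi>C] by blast
    interpret P: psiC2 \<psi> a k l by (rule pc)
    interpret P2': psiC2 "P.\<psi>2" a k l by (rule P.psi2_C2)
    have i1: "integrable \<nu> \<psi>" by (rule P2_integrable[OF \<nu> P.psi_borel P.psi_abs])
    have i2: "integrable \<nu> P.\<psi>2" by (rule P2_integrable[OF \<nu> P2'.psi_borel P2'.psi_abs])
    have "(\<integral>y. P.\<psi>2 y \<partial>\<nu>) \<le> (\<integral>y. \<psi> y \<partial>\<nu>)"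
      using i1 i2 P.psi2_le by (intro integral_mono) auto
    then have "\<Phi> P.\<psi>2 \<le> \<Phi> \<psi>" unfolding \<Phi>_def P.conj_psi2 by simp
    moreover have "P.\<psi>2 \<in> {\<psi> \<in> C2. convex_on UNIV \<psi>}"
      using psiC2_C2[OF P.psi2_C2] P.psi2_convex by simp
    ultimately show ?thesis by blast
  qed
  have "(INF \<psi> \<in> C2. \<Phi> \<psi>) = (INF \<psi> \<in> {\<psi> \<in> C2. convex_on UNIV \<psi>}. \<Phi> \<psi>)"
  proof (rule antisym)
    show "(INF \<psi> \<in> C2. \<Phi> \<psi>) \<le> (INF \<psi> \<in> {\<psi> \<in> C2. convex_on UNIV \<psi>}. \<Phi> \<psi>)"
      by (rule INF_superset_mono) auto
    show "(INF \<psi> \<in> {\<psi> \<in> C2. convex_on UNIV \<psi>}. \<Phi> \<psi>) \<le> (INF \<psi> \<in> C2. \<Phi> \<psi>)"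
    proof (rule INF_greatest)
      fix \<psi> :: "'a \<Rightarrow> real" assume "\<psi> \<in> C2"
      then obtain \<psi>' where "\<psi>' \<in> {\<psi> \<in> C2. convex_on UNIV \<psi>}" "\<Phi> \<psi>' \<le> \<Phi> \<psi>" using improve by blast
      then show "(INF \<psi> \<in> {\<psi> \<in> C2. convex_on UNIV \<psi>}. \<Phi> \<psi>) \<le> \<Phi> \<psi>" by (blast intro: INF_lower2)
    qed
  qed
  then show ?thesis using lhs by (simp add: \<Phi>_def)
qed


end
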